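(* Let $\ell:X^N\to\mathbb R$ be Borel measurable. For $\alpha=(\alpha_\pi)_{\pi\in\mathcal S_N}$ in the simplex $\Delta^{\mathcal S_N}=\{\alpha\in[0,1]^{\mathcal S_N}:\sum_\pi\alpha_\pi=1\}$ let $F_\alpha(\ell)=\sum_{\pi\in\mathcal S_N}\alpha_\pi\,\ell\circ\pi$. Then $$\inf_{\alpha\in\Delta^{\mathcal S_N}}U(F_\alpha(\ell))=\min_{\alpha\in\Delta^{\mathcal S_N}}U(F_\alpha(\ell))=U(\ell_{\mathrm{sym}}),$$ i.e. the infimum is attained at the uniform weights $\alpha_\pi=1/N!$.
   Context: $X$ is a nonempty Polish space, $c$ a proper transportation cost (lower semi-continuous, symmetric, $c(x,x)=0$, weak triangle inequality $c(x,y)\le K(c(x,z)+c(z,y))$, compact sublevel sets $\{x:c(x_0,x)\le r\}$), $\hat P$ a Borel probability measure with $\int c(x_0,\cdot)d\hat P<\infty$, $\rho>0$, $N\in\mathbb N$. $c^N(x,y)=\sum_{i=1}^Nc(x_i,y_i)$ and $\mathbb B^{c^N}_{N\rho}(\hat P^{\otimes N})$ is the set of Borel probability measures $\bar P$ on $X^N$ with finite $c^N$-moment and $W_{c^N}(\bar P,\hat P^{\otimes N})\le N\rho$, where $W$ denotes the optimal transport cost. For Borel $g:X^N\to\mathbb R$, $U(g)=\sup_{\bar P\in\mathbb B^{c^N}_{N\rho}(\hat P^{\otimes N})}\mathbb E_{\bar P}g$ (possibly $+\infty$). $\mathcal S_N$ is the symmetric group, identified with coordinate permutations $\pi(x)=(x_{\pi(1)},\dots,x_{\pi(N)})$;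 $\ell_{\mathrm{sym}}(x)=\frac1{N!}\sum_{\pi\in\mathcal S_N}\ell(\pi(x))$. *)

theory Defs
  imports "HOL-Probability.Probability"
begin

text \<open>Proper transportation cost on a Polish space (type class polish_space).
  Lower semicontinuity = all sublevel sets closed in X \<times> X.\<close>
definition proper_cost :: "('a::polish_space \<Rightarrow> 'a \<Rightarrow> real) \<Rightarrow> 'a \<Rightarrow> bool" where
  "proper_cost c x0 \<longleftrightarrow>
     (\<forall>t. closed {p. c (fst p) (snd p) \<le> t}) \<and>
     (\<forall>x y. c x y = c y x) \<and>
     (\<forall>x. c x x = 0) \<and>
     (\<exists>K>0. \<forall>x y z. c x y \<le> K * (c x z + c z y)) \<and>
     (\<forall>r. compact {x. c x0 x \<le> r})"

definition prodX :: "nat \<Rightarrow> (nat \<Rightarrow> 'a::topological_space) measure" where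
  "prodX N = PiM {..<N} (\<lambda>_. borel)"

definition costN :: "('a \<Rightarrow> 'a \<Rightarrow> real) \<Rightarrow> nat \<Rightarrow> (nat \<Rightarrow> 'a) \<Rightarrow> (nat \<Rightarrow> 'a) \<Rightarrow> real" where
  "costN c N x y = (\<Sum>i<N. c (x i) (y i))"

definition couplings :: "'a measure \<Rightarrow> 'b measure \<Rightarrow> ('a \<times> 'b) measure set" where
  "couplings M1 M2 = {\<gamma>. sets \<gamma> = sets (M1 \<Otimes>\<^sub>M M2) \<and> prob_space \<gamma> \<and>
       distr \<gamma> M1 fst = M1 \<and> distr \<gamma> M2 snd = M2}"

definition OT_cost :: "('a \<Rightarrow> 'b \<Rightarrow> real) \<Rightarrow> 'a measure \<Rightarrow> 'b measure \<Rightarrow> ennreal" where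
  "OT_cost cst M1 M2 = (INF \<gamma>\<in>couplings M1 M2. \<integral>\<^sup>+ p. ennreal (cst (fst p) (snd p)) \<partial>\<gamma>)"

definition ballN :: "('a::polish_space \<Rightarrow> 'a \<Rightarrow> real) \<Rightarrow> 'a \<Rightarrow> 'a measure \<Rightarrow> real \<Rightarrow> nat
     \<Rightarrow> (nat \<Rightarrow> 'a) measure set" where
  "ballN c x0 Ph \<rho> N = {Pb. sets Pb = sets (prodX N) \<and> prob_space Pb \<and>
      (\<integral>\<^sup>+ y. ennreal (costN c N (\<lambda>_. x0) y) \<partial>Pb) < \<infinity> \<and>
      OT_cost (costN c N) Pb (PiM {..<N} (\<lambda>_. Ph)) \<le> ennreal (real N * \<rho>)}"

text \<open>Extended expectation E[g] = E[g^+] - E[g^-], with the convention \<infinity> - \<infinity> = \<infinity>.\<close>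
definition expect :: "'a measure \<Rightarrow> ('a \<Rightarrow> real) \<Rightarrow> ereal" where
  "expect M g = (let p = (\<integral>\<^sup>+ x. ennreal (g x) \<partial>M); n = (\<integral>\<^sup>+ x. ennreal (- g x) \<partial>M) in
     if p = \<infinity> then \<infinity> else enn2ereal p - enn2ereal n)"

definition Uval :: "('a::polish_space \<Rightarrow> 'a \<Rightarrow> real) \<Rightarrow> 'a \<Rightarrow> 'a measure \<Rightarrow> real \<Rightarrow> nat
     \<Rightarrow> ((nat \<Rightarrow> 'a) \<Rightarrow> real) \<Rightarrow> ereal" where
  "Uval c x0 Ph \<rho> N g = (SUP Pb\<in>ballN c x0 Ph \<rho> N. expect Pb g)"

definition SymN :: "nat \<Rightarrow> (nat \<Rightarrow> nat) set" where
  "SymN N = {\<pi>. \<pi> permutes {..<N}}"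

text \<open>pi(x) = (x_{pi 1},...,x_{pi N}) corresponds to x \<circ> pi.\<close>
definition Falpha :: "nat \<Rightarrow> ((nat \<Rightarrow> nat) \<Rightarrow> real) \<Rightarrow> ((nat \<Rightarrow> 'a) \<Rightarrow> real) \<Rightarrow> (nat \<Rightarrow> 'a) \<Rightarrow> real" where
  "Falpha N \<alpha> l x = (\<Sum>\<pi>\<in>SymN N. \<alpha> \<pi> * l (x \<circ> \<pi>))"

definition simplexS :: "nat \<Rightarrow> ((nat \<Rightarrow> nat) \<Rightarrow> real) set" where
  "simplexS N = {\<alpha>. (\<forall>\<pi>\<in>SymN N. 0 \<le> \<alpha> \<pi> \<and> \<alpha> \<pi> \<le> 1) \<and> (\<Sum>\<pi>\<in>SymN N. \<alpha> \<pi>) = 1}"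

definition lsym :: "nat \<Rightarrow> ((nat \<Rightarrow> 'a) \<Rightarrow> real) \<Rightarrow> (nat \<Rightarrow> 'a) \<Rightarrow> real" where
  "lsym N l x = (1 / fact N) * (\<Sum>\<pi>\<in>SymN N. l (x \<circ> \<pi>))"

end

theory Submission
  imports Defs
begin


lemma ennreal_max0: "ennreal t = ennreal (max t 0)"
  by (cases "t \<ge> 0") (auto simp: ennreal_neg max_def)

lemma ennreal_plus3: "X \<ge> 0 \<Longrightarrow> Y \<ge> 0 \<Longrightarrow> Z \<ge> 0 \<Longrightarrow> ennreal (X+Y+Z) = ennreal X + ennreal Y + ennreal Z"
  by (simp add: ennreal_plus)

lemma ennreal_split_id:
  fixes a b :: real
  shows "ennreal (a+b) + ennreal (-a) + ennreal (-b) = ennreal (-(a+b)) + ennreal a + ennreal b"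
proof -
  have r: "max (a+b) 0 + max (-a) 0 + max (-b) 0 = max (-(a+b)) 0 + max a 0 + max b 0"
    by (cases "a \<ge> 0"; cases "b \<ge> 0"; cases "a + b \<ge> 0") (simp_all add: max_def)
  have "ennreal (a+b) + ennreal (-a) + ennreal (-b) = ennreal (max (a+b) 0) + ennreal (max (-a) 0) + ennreal (max (-b) 0)"
    by (simp only: ennreal_max0[symmetric])
  also have "\<dots> = ennreal (max (a+b) 0 + max (-a) 0 + max (-b) 0)"
    by (rule ennreal_plus3[symmetric]) auto
  also have "\<dots> = ennreal (max (-(a+b)) 0 + max a 0 + max b 0)" by (simp only: r)
  also have "\<dots> = ennreal (max (-(a+b)) 0) + ennreal (max a 0) + ennreal (max b 0)"
    by (rule ennreal_plus3) auto
  also have "\<dots> = ennreal (-(a+b)) + ennreal a + ennreal b"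
    by (simp only: ennreal_max0[symmetric])
  finally show ?thesis .
qed

lemma ennreal_add_le: "ennreal ((a::real)+b) \<le> ennreal a + ennreal b"
proof -
  have "ennreal (a+b) = ennreal (max (a+b) 0)" by (rule ennreal_max0)
  also have "\<dots> \<le> ennreal (max a 0 + max b 0)"
    by (rule ennreal_leI) (simp add: max_def)
  also have "\<dots> = ennreal (max a 0) + ennreal (max b 0)"
    by (rule ennreal_plus) auto
  also have "\<dots> = ennreal a + ennreal b" by (simp only: ennreal_max0[symmetric])
  finally show ?thesis .
qed

lemma expect_cong: "(\<And>x. x \<in> space M \<Longrightarrow> f x = g x) \<Longrightarrow> expect M f = expect M g"
  unfolding expect_def by (simp cong: nn_integral_cong)

lemma expect_distr:
  assumes "T \<in> measurable M N" "f \<in> borel_measurable N"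
  shows "expect (distr M N T) f = expect M (\<lambda>x. f (T x))"
  unfolding expect_def using assms by (simp add: nn_integral_distr)

lemma expect_zero: "expect M (\<lambda>x. 0) = 0"
  unfolding expect_def by (simp add: zero_ennreal.rep_eq)

lemma expect_add:
  assumes f: "f \<in> borel_measurable M" and g: "g \<in> borel_measurable M"
  shows "expect M (\<lambda>x. f x + g x) \<le> expect M f + expect M g"
proof -
  define pf where "pf = (\<integral>\<^sup>+ x. ennreal (f x) \<partial>M)"
  define nf where "nf = (\<integral>\<^sup>+ x. ennreal (- f x) \<partial>M)"
  define pg where "pg = (\<integral>\<^sup>+ x. ennreal (g x) \<partial>M)"
  define ng where "ng = (\<integral>\<^sup>+ x. ennreal (- g x) \<partial>M)"
  define pfg where "pfg = (\<integral>\<^sup>+ x. ennreal (f x + g x) \<partial>M)"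
  define nfg where "nfg = (\<integral>\<^sup>+ x. ennreal (- (f x + g x)) \<partial>M)"
  have id: "pfg + nf + ng = nfg + pf + pg"
  proof -
    have "pfg + nf + ng = (\<integral>\<^sup>+ x. ennreal (f x + g x) + ennreal (- f x) + ennreal (- g x) \<partial>M)"
      unfolding pfg_def nf_def ng_def using f g by (simp add: nn_integral_add)
    also have "\<dots> = (\<integral>\<^sup>+ x. ennreal (- (f x + g x)) + ennreal (f x) + ennreal (g x) \<partial>M)"
      by (simp add: ennreal_split_id)
    also have "\<dots> = nfg + pf + pg"
      unfolding nfg_def pf_def pg_def using f g by (simp add: nn_integral_add)
    finally show ?thesis .
  qed
  have le: "pfg \<le> pf + pg"
  proof -
    have "pfg \<le> (\<integral>\<^sup>+ x. ennreal (f x) + ennreal (g x) \<partial>M)"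
      unfolding pfg_def by (intro nn_integral_mono ennreal_add_le)
    also have "\<dots> = pf + pg" unfolding pf_def pg_def using f g by (simp add: nn_integral_add)
    finally show ?thesis .
  qed
  have Ef: "expect M f = (if pf = \<infinity> then \<infinity> else enn2ereal pf - enn2ereal nf)"
    unfolding expect_def pf_def nf_def by simp
  have Eg: "expect M g = (if pg = \<infinity> then \<infinity> else enn2ereal pg - enn2ereal ng)"
    unfolding expect_def pg_def ng_def by simp
  have Efg: "expect M (\<lambda>x. f x + g x) = (if pfg = \<infinity> then \<infinity> else enn2ereal pfg - enn2ereal nfg)"
    unfolding expect_def pfg_def nfg_def by simp
  show ?thesis
  proof (cases "pf = \<infinity> \<or> pg = \<infinity>")
    case True
    then show ?thesis using Ef Eg by auto
  next
    case False
    then have pfin: "pf \<noteq> \<infinity>" "pg \<noteq> \<infinity>" by auto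
    have pfgfin: "pfg \<noteq> \<infinity>"
    proof
      assume "pfg = \<infinity>"
      with le have "pf + pg = \<infinity>" by (metis top_unique infinity_ennreal_def)
      with pfin show False by (metis ennreal_add_eq_top infinity_ennreal_def)
    qed
    show ?thesis
    proof (cases "nf = \<infinity> \<or> ng = \<infinity>")
      case True
      then have "pfg + nf + ng = \<infinity>" by (metis ennreal_add_eq_top infinity_ennreal_def)
      then have "nfg + pf + pg = \<infinity>" by (simp only: id[symmetric])
      then have "nfg = \<infinity> \<or> pf = \<infinity> \<or> pg = \<infinity>" by (metis ennreal_add_eq_top infinity_ennreal_def)
      then have "nfg = \<infinity>" using pfin by blast
      moreover obtain e where "pfg = ennreal e" "e \<ge> 0" using pfgfin by (cases pfg) auto
      ultimately show ?thesis using Efg by simp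
    next
      case False
      then have nfin: "nf \<noteq> \<infinity>" "ng \<noteq> \<infinity>" by auto
      have nfgfin: "nfg \<noteq> \<infinity>"
      proof
        assume "nfg = \<infinity>"
        then have "nfg + pf + pg = \<infinity>" by (metis ennreal_add_eq_top infinity_ennreal_def)
        then have "pfg + nf + ng = \<infinity>" by (simp only: id)
        then have "pfg = \<infinity> \<or> nf = \<infinity> \<or> ng = \<infinity>" by (metis ennreal_add_eq_top infinity_ennreal_def)
        with nfin pfgfin show False by blast
      qed
      obtain a where a: "pf = ennreal a" "a \<ge> 0" using pfin by (cases pf) auto
      obtain b where b: "pg = ennreal b" "b \<ge> 0" using pfin by (cases pg) auto
      obtain c where c: "nf = ennreal c" "c \<ge> 0" using nfin by (cases nf) auto
      obtain d where d: "ng = ennreal d" "d \<ge> 0" using nfin by (cases ng) auto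
      obtain e where e: "pfg = ennreal e" "e \<ge> 0" using pfgfin by (cases pfg) auto
      obtain h where h: "nfg = ennreal h" "h \<ge> 0" using nfgfin by (cases nfg) auto
      have l1: "ennreal (e + c + d) = pfg + nf + ng" using e c d by simp
      have l2: "ennreal (h + a + b) = nfg + pf + pg" using h a b by simp
      have "ennreal (e + c + d) = ennreal (h + a + b)" by (simp only: l1 l2 id)
      then have r: "e + c + d = h + a + b" using a b c d e h by (subst (asm) ennreal_inj) auto
      have x1: "expect M (\<lambda>x. f x + g x) = ereal (e - h)" using Efg e h by simp
      have x2: "expect M f = ereal (a - c)" using Ef a c by simp
      have x3: "expect M g = ereal (b - d)" using Eg b d by simp
      show ?thesis unfolding x1 x2 x3 using r by simp
    qed
  qed
qed

lemma expect_cmult: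
  assumes r: "r > 0" and f: "f \<in> borel_measurable M"
  shows "expect M (\<lambda>x. r * f x) = ereal r * expect M f"
proof -
  define pf where "pf = (\<integral>\<^sup>+ x. ennreal (f x) \<partial>M)"
  define nf where "nf = (\<integral>\<^sup>+ x. ennreal (- f x) \<partial>M)"
  have p: "(\<integral>\<^sup>+ x. ennreal (r * f x) \<partial>M) = ennreal r * pf"
    unfolding pf_def using r f by (simp add: ennreal_mult' nn_integral_cmult)
  have n: "(\<integral>\<^sup>+ x. ennreal (- (r * f x)) \<partial>M) = ennreal r * nf"
  proof -
    have "(\<integral>\<^sup>+ x. ennreal (- (r * f x)) \<partial>M) = (\<integral>\<^sup>+ x. ennreal r * ennreal (- f x) \<partial>M)"
      proof (rule nn_integral_cong)
      fix x have "- (r * f x) = r * (- f x)" by simp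
      then show "ennreal (- (r * f x)) = ennreal r * ennreal (- f x)"
        using ennreal_mult'[of r "- f x"] r by simp
    qed
    also have "\<dots> = ennreal r * nf" unfolding nf_def using f by (simp add: nn_integral_cmult)
    finally show ?thesis .
  qed
  have Ef: "expect M f = (if pf = \<infinity> then \<infinity> else enn2ereal pf - enn2ereal nf)"
    unfolding expect_def pf_def nf_def by simp
  have E: "expect M (\<lambda>x. r * f x) = (if ennreal r * pf = \<infinity> then \<infinity> else enn2ereal (ennreal r * pf) - enn2ereal (ennreal r * nf))"
    unfolding expect_def p n by simp
  show ?thesis
  proof (cases "pf = \<infinity>")
    case True then show ?thesis using E Ef r by (simp add: ennreal_mult_eq_top_iff)
  next
    case False
    obtain a where a: "pf = ennreal a" "a \<ge> 0" using False by (cases pf) auto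
    show ?thesis
    proof (cases "nf = \<infinity>")
      case True then show ?thesis using E Ef r a by (simp add: ennreal_mult_eq_top_iff ennreal_mult[symmetric])
    next
      case False
      obtain b where b: "nf = ennreal b" "b \<ge> 0" using False by (cases nf) auto
      show ?thesis using E Ef r a b by (simp add: ennreal_mult[symmetric] right_diff_distrib)
    qed
  qed
qed

lemma expect_sum:
  assumes "finite S" "\<And>i. i \<in> S \<Longrightarrow> f i \<in> borel_measurable M"
  shows "expect M (\<lambda>x. \<Sum>i\<in>S. f i x) \<le> (\<Sum>i\<in>S. expect M (f i))"
  using assms
proof (induction S rule: finite_induct)
  case empty then show ?case by (simp add: expect_zero)
next
  case (insert a S)
  have "expect M (\<lambda>x. \<Sum>i\<in>insert a S. f i x) = expect M (\<lambda>x. f a x + (\<Sum>i\<in>S. f i x))"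
    using insert by simp
  also have "\<dots> \<le> expect M (f a) + expect M (\<lambda>x. \<Sum>i\<in>S. f i x)"
    using insert by (intro expect_add) auto
  also have "\<dots> \<le> expect M (f a) + (\<Sum>i\<in>S. expect M (f i))"
    using insert by (intro add_left_mono) auto
  finally show ?case using insert by simp
qed



definition permX :: "nat \<Rightarrow> (nat \<Rightarrow> nat) \<Rightarrow> (nat \<Rightarrow> 'a) \<Rightarrow> nat \<Rightarrow> 'a" where
  "permX N \<sigma> x = (\<lambda>n\<in>{..<N}. x (\<sigma> n))"

lemma distr_target_cong: "sets A = sets B \<Longrightarrow> distr M A f = distr M B f"
  unfolding distr_def by (metis sets_eq_imp_space_eq)

lemma permX_measurable:
  assumes "\<sigma> permutes {..<N}"
  shows "permX N \<sigma> \<in> measurable (PiM {..<N} (\<lambda>_. B)) (PiM {..<N} (\<lambda>_. B))"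
  unfolding permX_def
proof (rule measurable_restrict)
  fix i assume "i \<in> {..<N}"
  then have "\<sigma> i \<in> {..<N}" using permutes_in_image[OF assms, of i] by simp
  then show "(\<lambda>x. x (\<sigma> i)) \<in> measurable (PiM {..<N} (\<lambda>_. B)) B"
    by (rule measurable_component_singleton)
qed

lemma permX_space:
  assumes "\<sigma> permutes {..<N}" "x \<in> space (PiM {..<N} (\<lambda>_. B))"
  shows "permX N \<sigma> x = x \<circ> \<sigma>"
proof
  fix n show "permX N \<sigma> x n = (x \<circ> \<sigma>) n"
  proof (cases "n < N")
    case True then show ?thesis by (simp add: permX_def)
  next
    case False
    then have "\<sigma> n = n" using assms(1) by (auto simp: permutes_def)
    moreover have "x n = undefined" using assms(2) False by (auto simp: space_PiM PiE_def extensional_def)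
    ultimately show ?thesis using False by (simp add: permX_def)
  qed
qed

lemma costN_permX:
  assumes "\<sigma> permutes {..<N}"
  shows "costN c N (permX N \<sigma> x) (permX N \<sigma> y) = costN c N x y"
proof -
  have "costN c N (permX N \<sigma> x) (permX N \<sigma> y) = (\<Sum>i<N. c (x (\<sigma> i)) (y (\<sigma> i)))"
    unfolding costN_def permX_def by (rule sum.cong) auto
  also have "\<dots> = (\<Sum>i<N. c (x i) (y i))"
    by (subst sum.permute[OF assms]) (simp add: comp_def)
  finally show ?thesis unfolding costN_def .
qed

lemma costN_permX0:
  assumes "\<sigma> permutes {..<N}"
  shows "costN c N (\<lambda>_. x0) (permX N \<sigma> y) = costN c N (\<lambda>_. x0) y"
proof -
  have "costN c N (\<lambda>_. x0) (permX N \<sigma> y) = (\<Sum>i<N. c x0 (y (\<sigma> i)))"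
    unfolding costN_def permX_def by (rule sum.cong) auto
  also have "\<dots> = (\<Sum>i<N. c x0 (y i))"
    by (subst sum.permute[OF assms]) (simp add: comp_def)
  finally show ?thesis unfolding costN_def .
qed

lemma cost_meas:
  assumes "proper_cost c x0"
  shows "(\<lambda>p. c (fst p) (snd p)) \<in> borel_measurable ((borel :: 'a::polish_space measure) \<Otimes>\<^sub>M borel)"
proof -
  have "closed {p. c (fst p) (snd p) \<le> t}" for t using assms unfolding proper_cost_def by blast
  then have "(\<lambda>p. c (fst p) (snd p)) \<in> borel_measurable (borel :: ('a \<times> 'a) measure)"
    by (auto simp: borel_measurable_iff_le borel_closed)
  then show ?thesis by (simp add: borel_prod)
qed

lemma costN_meas:
  assumes "proper_cost c x0"
  shows "(\<lambda>p. costN c N (fst p) (snd p)) \<in> borel_measurable (prodX N \<Otimes>\<^sub>M prodX N)"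
proof -
  have "(\<lambda>p. c (fst p i) (snd p i)) \<in> borel_measurable (prodX N \<Otimes>\<^sub>M prodX N)" if "i < N" for i
  proof -
    have i: "i \<in> {..<N}" using that by simp
    have "(\<lambda>p. (fst p i, snd p i)) \<in> measurable ((prodX N :: (nat \<Rightarrow> 'a) measure) \<Otimes>\<^sub>M prodX N) (borel \<Otimes>\<^sub>M borel)"
      unfolding prodX_def
      by (rule measurable_Pair[OF measurable_compose[OF measurable_fst measurable_component_singleton[OF i]]
           measurable_compose[OF measurable_snd measurable_component_singleton[OF i]]])
    from measurable_compose[OF this cost_meas[OF assms]] show ?thesis by simp
  qed
  then show ?thesis unfolding costN_def by (intro borel_measurable_sum) auto
qed

lemma costN_meas0:
  assumes "proper_cost c x0"
  shows "(\<lambda>y. costN c N (\<lambda>_. x0) y) \<in> borel_measurable (prodX N)"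
proof -
  have "(\<lambda>y. c x0 (y i)) \<in> borel_measurable (prodX N)" if "i < N" for i
  proof -
    have i: "i \<in> {..<N}" using that by simp
    have "(\<lambda>y. (x0, y i)) \<in> measurable (prodX N :: (nat \<Rightarrow> 'a) measure) (borel \<Otimes>\<^sub>M borel)"
      unfolding prodX_def
      by (rule measurable_Pair[OF measurable_const measurable_component_singleton[OF i]]) simp
    from measurable_compose[OF this cost_meas[OF assms]] show ?thesis by simp
  qed
  then show ?thesis unfolding costN_def by (intro borel_measurable_sum) auto
qed



lemma ball_perm:
  fixes c :: "'a::polish_space \<Rightarrow> 'a \<Rightarrow> real"
  assumes cost: "proper_cost c x0" and Ph_sets: "sets Ph = sets borel" and Ph_prob: "prob_space Ph"
    and \<sigma>: "\<sigma> permutes {..<N}" and P: "Pb \<in> ballN c x0 Ph \<rho> N"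
  shows "distr Pb (prodX N) (permX N \<sigma>) \<in> ballN c x0 Ph \<rho> N"
proof -
  let ?M = "prodX N :: (nat \<Rightarrow> 'a) measure"
  let ?Q = "PiM {..<N} (\<lambda>_. Ph)"
  let ?T = "permX N \<sigma> :: (nat \<Rightarrow> 'a) \<Rightarrow> _"
  let ?P' = "distr Pb ?M ?T"
  have sP: "sets Pb = sets ?M" and pP: "prob_space Pb"
    and mom: "(\<integral>\<^sup>+ y. ennreal (costN c N (\<lambda>_. x0) y) \<partial>Pb) < \<infinity>"
    and ot: "OT_cost (costN c N) Pb ?Q \<le> ennreal (real N * \<rho>)"
    using P unfolding ballN_def by auto
  have TM: "?T \<in> measurable ?M ?M" unfolding prodX_def by (rule permX_measurable[OF \<sigma>])
  have TP: "?T \<in> measurable Pb ?M" using TM by (simp add: measurable_cong_sets[OF sP refl])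
  have sQ: "sets ?Q = sets ?M" unfolding prodX_def using Ph_sets by (intro sets_PiM_cong) auto
  have TQ: "?T \<in> measurable ?Q ?Q" by (rule permX_measurable[OF \<sigma>])
  have Qinv: "distr ?Q ?M ?T = ?Q"
  proof -
    have pp: "\<And>i. i \<in> {..<N} \<Longrightarrow> prob_space ((\<lambda>_. Ph) i)" using Ph_prob by simp
    have sfun: "\<sigma> \<in> {..<N} \<rightarrow> {..<N}" using permutes_in_image[OF \<sigma>] by auto
    have "distr ?Q ?M ?T = distr ?Q ?Q ?T" by (rule distr_target_cong) (simp add: sQ)
    also have "\<dots> = ?Q" unfolding permX_def
      using distr_PiM_reindex[OF pp permutes_inj_on[OF \<sigma>] sfun] by simp
    finally show ?thesis .
  qed
  have sP': "sets ?P' = sets ?M" by simp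
  have pP': "prob_space ?P'" using pP TP by (rule prob_space.prob_space_distr)
  have mom': "(\<integral>\<^sup>+ y. ennreal (costN c N (\<lambda>_. x0) y) \<partial>?P') < \<infinity>"
  proof -
    have "(\<integral>\<^sup>+ y. ennreal (costN c N (\<lambda>_. x0) y) \<partial>?P')
        = (\<integral>\<^sup>+ y. ennreal (costN c N (\<lambda>_. x0) (?T y)) \<partial>Pb)"
      using TP costN_meas0[OF cost] by (simp add: nn_integral_distr)
    also have "\<dots> = (\<integral>\<^sup>+ y. ennreal (costN c N (\<lambda>_. x0) y) \<partial>Pb)"
      by (simp add: costN_permX0[OF \<sigma>])
    finally show ?thesis using mom by simp
  qed
  have "OT_cost (costN c N) ?P' ?Q \<le> OT_cost (costN c N) Pb ?Q"
    unfolding OT_cost_def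
  proof (rule INF_greatest)
    fix \<gamma> assume \<gamma>: "\<gamma> \<in> couplings Pb ?Q"
    define S where "S = (\<lambda>p. (?T (fst p), ?T (snd p)))"
    have s\<gamma>: "sets \<gamma> = sets (?M \<Otimes>\<^sub>M ?M)"
    proof -
      have "sets (Pb \<Otimes>\<^sub>M ?Q) = sets (?M \<Otimes>\<^sub>M ?M)"
        by (rule sets_pair_measure_cong) (simp_all add: sP sQ)
      then show ?thesis using \<gamma> unfolding couplings_def by simp
    qed
    have p\<gamma>: "prob_space \<gamma>" and m1: "distr \<gamma> Pb fst = Pb" and m2: "distr \<gamma> ?Q snd = ?Q"
      using \<gamma> unfolding couplings_def by auto
    have SM: "S \<in> measurable (?M \<Otimes>\<^sub>M ?M) (?M \<Otimes>\<^sub>M ?M)" unfolding S_def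
      by (rule measurable_Pair[OF measurable_compose[OF measurable_fst TM] measurable_compose[OF measurable_snd TM]])
    have S\<gamma>: "S \<in> measurable \<gamma> (?M \<Otimes>\<^sub>M ?M)" using SM by (simp add: measurable_cong_sets[OF s\<gamma> refl])
    have fst\<gamma>: "fst \<in> measurable \<gamma> ?M" using measurable_fst by (simp add: measurable_cong_sets[OF s\<gamma> refl])
    have snd\<gamma>: "snd \<in> measurable \<gamma> ?M" using measurable_snd by (simp add: measurable_cong_sets[OF s\<gamma> refl])
    define \<gamma>' where "\<gamma>' = distr \<gamma> (?M \<Otimes>\<^sub>M ?M) S"
    have "\<gamma>' \<in> couplings ?P' ?Q"
      unfolding couplings_def
    proof (intro CollectI conjI)
      have "sets (?P' \<Otimes>\<^sub>M ?Q) = sets (?M \<Otimes>\<^sub>M ?M)"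
        by (rule sets_pair_measure_cong) (simp_all add: sQ)
      then show "sets \<gamma>' = sets (?P' \<Otimes>\<^sub>M ?Q)" unfolding \<gamma>'_def by simp
      show "prob_space \<gamma>'" unfolding \<gamma>'_def using p\<gamma> S\<gamma> by (rule prob_space.prob_space_distr)
      have "distr \<gamma>' ?P' fst = distr \<gamma>' ?M fst" by (rule distr_target_cong) simp
      also have "\<dots> = distr \<gamma> ?M (fst \<circ> S)" unfolding \<gamma>'_def
        by (rule distr_distr[OF measurable_fst S\<gamma>])
      also have "fst \<circ> S = ?T \<circ> fst" by (auto simp: S_def)
      also have "distr \<gamma> ?M (?T \<circ> fst) = distr (distr \<gamma> ?M fst) ?M ?T"
        by (rule distr_distr[OF TM fst\<gamma>, symmetric])
      also have "distr \<gamma> ?M fst = Pb" using distr_target_cong[of ?M Pb \<gamma> fst] m1 sP by simp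
      finally show "distr \<gamma>' ?P' fst = ?P'" .
      have "distr \<gamma>' ?Q snd = distr \<gamma>' ?M snd" by (rule distr_target_cong) (simp add: sQ)
      also have "\<dots> = distr \<gamma> ?M (snd \<circ> S)" unfolding \<gamma>'_def
        by (rule distr_distr[OF measurable_snd S\<gamma>])
      also have "snd \<circ> S = ?T \<circ> snd" by (auto simp: S_def)
      also have "distr \<gamma> ?M (?T \<circ> snd) = distr (distr \<gamma> ?M snd) ?M ?T"
        by (rule distr_distr[OF TM snd\<gamma>, symmetric])
      also have "distr \<gamma> ?M snd = ?Q" using distr_target_cong[of ?M ?Q \<gamma> snd] m2 sQ by simp
      also have "distr ?Q ?M ?T = ?Q" by (rule Qinv)
      finally show "distr \<gamma>' ?Q snd = ?Q" .
    qed
    then have "(INF \<gamma>\<in>couplings ?P' ?Q. \<integral>\<^sup>+ p. ennreal (costN c N (fst p) (snd p)) \<partial>\<gamma>)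
        \<le> (\<integral>\<^sup>+ p. ennreal (costN c N (fst p) (snd p)) \<partial>\<gamma>')"
      by (rule INF_lower)
    also have "(\<integral>\<^sup>+ p. ennreal (costN c N (fst p) (snd p)) \<partial>\<gamma>')
        = (\<integral>\<^sup>+ p. ennreal (costN c N (fst (S p)) (snd (S p))) \<partial>\<gamma>)"
      unfolding \<gamma>'_def using S\<gamma> costN_meas[OF cost] by (simp add: nn_integral_distr)
    also have "\<dots> = (\<integral>\<^sup>+ p. ennreal (costN c N (fst p) (snd p)) \<partial>\<gamma>)"
      by (simp add: S_def costN_permX[OF \<sigma>])
    finally show "(INF \<gamma>\<in>couplings ?P' ?Q. \<integral>\<^sup>+ p. ennreal (costN c N (fst p) (snd p)) \<partial>\<gamma>)
        \<le> (\<integral>\<^sup>+ p. ennreal (costN c N (fst p) (snd p)) \<partial>\<gamma>)" .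
  qed
  then have ot': "OT_cost (costN c N) ?P' ?Q \<le> ennreal (real N * \<rho>)" using ot by simp
  show ?thesis unfolding ballN_def using sP' pP' mom' ot' by blast
qed

lemma finite_SymN: "finite (SymN N)"
  unfolding SymN_def by (simp add: finite_permutations)

lemma card_SymN: "card (SymN N) = fact N"
  unfolding SymN_def by (rule card_permutations) auto

lemma sym_decomp:
  assumes "(\<Sum>\<pi>\<in>SymN N. \<alpha> \<pi>) = 1"
  shows "lsym N l x = (\<Sum>\<sigma>\<in>SymN N. (1 / fact N) * Falpha N \<alpha> l (x \<circ> \<sigma>))"
proof -
  define S where "S = (\<Sum>\<tau>\<in>SymN N. l (x \<circ> \<tau>))"
  have inner: "(\<Sum>\<sigma>\<in>SymN N. l (x \<circ> \<sigma> \<circ> \<pi>)) = S" if \<pi>: "\<pi> \<in> SymN N" for \<pi>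
    unfolding S_def
  proof (rule sum.reindex_bij_witness[of _ "\<lambda>\<tau>. \<tau> \<circ> inv \<pi>" "\<lambda>\<sigma>. \<sigma> \<circ> \<pi>"])
    have p: "\<pi> permutes {..<N}" using \<pi> by (simp add: SymN_def)
    fix a assume a: "a \<in> SymN N"
    then have ap: "a permutes {..<N}" by (simp add: SymN_def)
    show "a \<circ> \<pi> \<circ> inv \<pi> = a" using permutes_inv_o(1)[OF p] by (simp add: o_assoc[symmetric])
    show "a \<circ> \<pi> \<in> SymN N" using permutes_compose[OF p ap] by (simp add: SymN_def)
    show "a \<circ> inv \<pi> \<circ> \<pi> = a" using permutes_inv_o(2)[OF p] by (simp add: o_assoc[symmetric])
    show "a \<circ> inv \<pi> \<in> SymN N" using permutes_compose[OF permutes_inv[OF p] ap] by (simp add: SymN_def)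
    show "l (x \<circ> (a \<circ> \<pi>)) = l (x \<circ> a \<circ> \<pi>)" by (simp add: o_assoc)
  qed
  have "(\<Sum>\<sigma>\<in>SymN N. (1 / fact N) * Falpha N \<alpha> l (x \<circ> \<sigma>))
      = (1 / fact N) * (\<Sum>\<sigma>\<in>SymN N. \<Sum>\<pi>\<in>SymN N. \<alpha> \<pi> * l (x \<circ> \<sigma> \<circ> \<pi>))"
    by (simp add: Falpha_def sum_distrib_left)
  also have "(\<Sum>\<sigma>\<in>SymN N. \<Sum>\<pi>\<in>SymN N. \<alpha> \<pi> * l (x \<circ> \<sigma> \<circ> \<pi>))
      = (\<Sum>\<pi>\<in>SymN N. \<Sum>\<sigma>\<in>SymN N. \<alpha> \<pi> * l (x \<circ> \<sigma> \<circ> \<pi>))"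
    by (rule sum.swap)
  also have "\<dots> = (\<Sum>\<pi>\<in>SymN N. \<alpha> \<pi> * S)"
    by (rule sum.cong) (simp_all add: sum_distrib_left[symmetric] inner)
  also have "\<dots> = S" using assms by (simp add: sum_distrib_right[symmetric])
  finally show ?thesis unfolding lsym_def S_def by (rule sym)
qed

lemma Falpha_meas:
  assumes meas: "l \<in> borel_measurable (prodX N)"
  shows "Falpha N \<alpha> l \<in> borel_measurable (prodX N)"
proof -
  have "(\<lambda>x. \<alpha> \<pi> * l (x \<circ> \<pi>)) \<in> borel_measurable (prodX N)" if "\<pi> \<in> SymN N" for \<pi>
  proof -
    have p: "\<pi> permutes {..<N}" using that by (simp add: SymN_def)
    have "(\<lambda>x. l (permX N \<pi> x)) \<in> borel_measurable (prodX N)"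
      using measurable_compose[OF permX_measurable[OF p] meas[unfolded prodX_def]] unfolding prodX_def .
    then have "(\<lambda>x. l (x \<circ> \<pi>)) \<in> borel_measurable (prodX N)"
      by (rule measurable_cong[THEN iffD1, rotated]) (simp add: prodX_def permX_space[OF p])
    then show ?thesis by simp
  qed
  moreover have "Falpha N \<alpha> l = (\<lambda>x. \<Sum>\<pi>\<in>SymN N. \<alpha> \<pi> * l (x \<circ> \<pi>))"
    by (rule ext) (simp add: Falpha_def)
  ultimately show ?thesis by (simp add: borel_measurable_sum)
qed

lemma U_sym_le:
  fixes c :: "'a::polish_space \<Rightarrow> 'a \<Rightarrow> real"
  assumes cost: "proper_cost c x0" and Ph_sets: "sets Ph = sets borel" and Ph_prob: "prob_space Ph"
    and meas: "l \<in> borel_measurable (prodX N)"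
    and \<alpha>: "(\<Sum>\<pi>\<in>SymN N. \<alpha> \<pi>) = 1"
  shows "Uval c x0 Ph \<rho> N (lsym N l) \<le> Uval c x0 Ph \<rho> N (Falpha N \<alpha> l)"
  unfolding Uval_def[of c x0 Ph \<rho> N "lsym N l"]
proof (rule SUP_least)
  let ?M = "prodX N :: (nat \<Rightarrow> 'a) measure"
  let ?g = "Falpha N \<alpha> l"
  let ?k = "1 / fact N :: real"
  let ?U = "Uval c x0 Ph \<rho> N ?g"
  have gM: "?g \<in> borel_measurable ?M" by (rule Falpha_meas[OF meas])
  fix Pb assume P: "Pb \<in> ballN c x0 Ph \<rho> N"
  have sP: "sets Pb = sets ?M" using P unfolding ballN_def by auto
  have spP: "space Pb = space ?M" using sP by (rule sets_eq_imp_space_eq)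
  have gT: "(\<lambda>x. ?g (permX N \<sigma> x)) \<in> borel_measurable Pb" if "\<sigma> \<in> SymN N" for \<sigma>
  proof -
    have p: "\<sigma> permutes {..<N}" using that by (simp add: SymN_def)
    have "(\<lambda>x. ?g (permX N \<sigma> x)) \<in> borel_measurable ?M"
      using measurable_compose[OF permX_measurable[OF p] gM[unfolded prodX_def]] unfolding prodX_def .
    then show ?thesis by (simp add: measurable_cong_sets[OF sP refl])
  qed
  have "expect Pb (lsym N l) = expect Pb (\<lambda>x. \<Sum>\<sigma>\<in>SymN N. ?k * ?g (permX N \<sigma> x))"
  proof (rule expect_cong)
    fix x assume x: "x \<in> space Pb"
    have "permX N \<sigma> x = x \<circ> \<sigma>" if "\<sigma> \<in> SymN N" for \<sigma>
      using that x spP by (intro permX_space) (auto simp: SymN_def prodX_def)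
    then show "lsym N l x = (\<Sum>\<sigma>\<in>SymN N. ?k * ?g (permX N \<sigma> x))"
      by (simp add: sym_decomp[OF \<alpha>])
  qed
  also have "\<dots> \<le> (\<Sum>\<sigma>\<in>SymN N. expect Pb (\<lambda>x. ?k * ?g (permX N \<sigma> x)))"
    by (rule expect_sum) (auto simp: finite_SymN intro!: borel_measurable_times borel_measurable_divide gT)
  also have "\<dots> = (\<Sum>\<sigma>\<in>SymN N. ereal ?k * expect (distr Pb ?M (permX N \<sigma>)) ?g)"
  proof (rule sum.cong[OF refl])
    fix \<sigma> assume s: "\<sigma> \<in> SymN N"
    have p: "\<sigma> permutes {..<N}" using s by (simp add: SymN_def)
    have TP: "permX N \<sigma> \<in> measurable Pb ?M"
      using permX_measurable[OF p] by (simp add: measurable_cong_sets[OF sP refl] prodX_def)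
    show "expect Pb (\<lambda>x. ?k * ?g (permX N \<sigma> x)) = ereal ?k * expect (distr Pb ?M (permX N \<sigma>)) ?g"
      using expect_cmult[OF _ gT[OF s], of ?k] expect_distr[OF TP gM] by simp
  qed
  also have "\<dots> \<le> (\<Sum>\<sigma>\<in>SymN N. ereal ?k * ?U)"
  proof (rule sum_mono)
    fix \<sigma> assume s: "\<sigma> \<in> SymN N"
    have p: "\<sigma> permutes {..<N}" using s by (simp add: SymN_def)
    have "distr Pb ?M (permX N \<sigma>) \<in> ballN c x0 Ph \<rho> N"
      by (rule ball_perm[OF cost Ph_sets Ph_prob p P])
    then have "expect (distr Pb ?M (permX N \<sigma>)) ?g \<le> ?U"
      unfolding Uval_def by (rule SUP_upper)
    then show "ereal ?k * expect (distr Pb ?M (permX N \<sigma>)) ?g \<le> ereal ?k * ?U"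
      by (rule ereal_mult_left_mono) simp
  qed
  also have "\<dots> = ?U"
  proof -
    have "(\<Sum>\<sigma>\<in>SymN N. ereal ?k * ?U) = (\<Sum>\<sigma>\<in>SymN N. ereal ?k) * ?U"
      by (rule sum_ereal_left_distrib[symmetric]) simp
    also have "(\<Sum>\<sigma>\<in>SymN N. ereal ?k) = 1"
      by (simp add: card_SymN)
    finally show ?thesis by simp
  qed
  finally show "expect Pb (lsym N l) \<le> ?U" .
qed

theorem mainTheorem6:
  fixes c :: "'a::polish_space \<Rightarrow> 'a \<Rightarrow> real" and x0 :: 'a
    and Ph :: "'a measure" and \<rho> :: real and N :: nat
    and l :: "(nat \<Rightarrow> 'a) \<Rightarrow> real"
  assumes cost: "proper_cost c x0"
    and Ph_sets: "sets Ph = sets borel" and Ph_prob: "prob_space Ph"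
    and Ph_moment: "(\<integral>\<^sup>+ x. ennreal (c x0 x) \<partial>Ph) < \<infinity>"
    and rho: "\<rho> > 0" and N: "N \<ge> 1"
    and meas: "l \<in> borel_measurable (prodX N)"
  shows "(\<lambda>_. 1 / fact N) \<in> simplexS N
    \<and> Uval c x0 Ph \<rho> N (Falpha N (\<lambda>_. 1 / fact N) l) = Uval c x0 Ph \<rho> N (lsym N l)
    \<and> (INF \<alpha>\<in>simplexS N. Uval c x0 Ph \<rho> N (Falpha N \<alpha> l)) = Uval c x0 Ph \<rho> N (lsym N l)"
proof -
  have unif: "(\<lambda>_. 1 / fact N) \<in> simplexS N"
    unfolding simplexS_def by (simp add: card_SymN divide_le_eq_1)
  have F: "Falpha N (\<lambda>_. 1 / fact N) l = lsym N l"
    by (rule ext) (simp add: Falpha_def lsym_def sum_distrib_left)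
  have "(INF \<alpha>\<in>simplexS N. Uval c x0 Ph \<rho> N (Falpha N \<alpha> l)) = Uval c x0 Ph \<rho> N (lsym N l)"
  proof (rule antisym)
    show "(INF \<alpha>\<in>simplexS N. Uval c x0 Ph \<rho> N (Falpha N \<alpha> l)) \<le> Uval c x0 Ph \<rho> N (lsym N l)"
      using INF_lower[OF unif, of "\<lambda>\<alpha>. Uval c x0 Ph \<rho> N (Falpha N \<alpha> l)"] F by simp
    show "Uval c x0 Ph \<rho> N (lsym N l) \<le> (INF \<alpha>\<in>simplexS N. Uval c x0 Ph \<rho> N (Falpha N \<alpha> l))"
    proof (rule INF_greatest)
      fix \<alpha> assume "\<alpha> \<in> simplexS N"
      then have "(\<Sum>\<pi>\<in>SymN N. \<alpha> \<pi>) = 1" unfolding simplexS_def by blast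
      then show "Uval c x0 Ph \<rho> N (lsym N l) \<le> Uval c x0 Ph \<rho> N (Falpha N \<alpha> l)"
        by (rule U_sym_le[OF cost Ph_sets Ph_prob meas])
    qed
  qed
  then show ?thesis using unif F by simp
qed

end
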